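(* Let $a_1,\dots,a_n\in\overline K$ ($n\ge2$) be pairwise distinct and $\mu=(\mu_1,\dots,\mu_n)$ positive integers. Let $A_\mu$ be the generalized magic matrix of the bouquet with multiplicities $\prod_i(y-a_i)^{\mu_i}$ and $(\mathcal R,\gamma)$ the tree associated with the underlying bouquet $(a_1,\dots,a_n)$. Then $A_\mu=\sum_{T\in\mathcal R}\gamma(T)A_\mu(T)$.
   Context: $\overline{K}=\bigcup_{d\ge1}\mathbf{C}[[x^{1/d}]][1/x]$ with valuation $\nu$; $m_{i,j}=\nu(a_i-a_j)$. $A_\mu=(\alpha_{i,j})$ with $\alpha_{i,j}=-\mu_im_{i,j}$ for $i\ne j$ and $\alpha_{i,i}=\sum_{k\neq i}\mu_km_{k,i}$. For $T\subset T_0=\{1,\dots,n\}$ with $|T|\ge2$, $A_\mu(T)=(\alpha_{i,j})$ with $\alpha_{i,j}=-\mu_i$ if $i\ne j$ and $\{i,j\}\subset T$, $\alpha_{i,i}=\sum_{k\ne i,k\in T}\mu_k$ if $i\in T$, $0$ otherwise. A "rameau" is $T\subset T_0$ with $|T|\ge2$ such that $m_{i,j}>m_{i,k}=m_{j,k}$ for all $i\neq j$ in $T$, $k\notin T$; $\mathcal R$ is the set of rameaux; $\alpha(T)=\inf\{m_{i,j}:i\ne j\in T\}$; $\gamma(T_0)=\alpha(T_0)$ and for $T\ne T_0$, $\gamma(T)=\alpha(T)-\alpha(T')$ with $T'$ the smallest rameau strictly containing $T$. *)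

theory Defs
  imports Complex_Main
begin

text \<open>Elements of K-bar = union over d of C[[x^(1/d)]][1/x] (Puiseux series), represented
 by their coefficient function q \<mapsto> coefficient of x^q, q rational.\<close>
definition puiseux :: "(rat \<Rightarrow> complex) set" where
  "puiseux = {f. \<exists>d::nat. d > 0 \<and> (\<exists>N::int. \<forall>q. f q \<noteq> 0 \<longrightarrow>
                 (\<exists>k::int. k \<ge> N \<and> q = of_int k / of_nat d))}"

definition val :: "(rat \<Rightarrow> complex) \<Rightarrow> rat" where
  "val f = (THE q. f q \<noteq> 0 \<and> (\<forall>p<q. f p = 0))"

definition mval :: "(nat \<Rightarrow> rat \<Rightarrow> complex) \<Rightarrow> nat \<Rightarrow> nat \<Rightarrow> rat" where
  "mval a i j = val (\<lambda>q. a i q - a j q)"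

definition magic :: "(nat \<Rightarrow> rat \<Rightarrow> complex) \<Rightarrow> (nat \<Rightarrow> nat) \<Rightarrow> nat \<Rightarrow> nat \<Rightarrow> nat \<Rightarrow> rat" where
  "magic a \<mu> n i j = (if i = j then (\<Sum>k\<in>{1..n}-{i}. of_nat (\<mu> k) * mval a k i)
                      else - of_nat (\<mu> i) * mval a i j)"

definition magicT :: "(nat \<Rightarrow> nat) \<Rightarrow> nat set \<Rightarrow> nat \<Rightarrow> nat \<Rightarrow> rat" where
  "magicT \<mu> T i j = (if i \<in> T \<and> j \<in> T then
       (if i = j then (\<Sum>k\<in>T-{i}. of_nat (\<mu> k)) else - of_nat (\<mu> i))
     else 0)"

definition rameaux :: "(nat \<Rightarrow> rat \<Rightarrow> complex) \<Rightarrow> nat \<Rightarrow> nat set set" where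
  "rameaux a n = {T. T \<subseteq> {1..n} \<and> card T \<ge> 2 \<and>
     (\<forall>i\<in>T. \<forall>j\<in>T. \<forall>k\<in>{1..n}-T. i \<noteq> j \<longrightarrow>
        mval a i j > mval a i k \<and> mval a i k = mval a j k)}"

definition alphaT :: "(nat \<Rightarrow> rat \<Rightarrow> complex) \<Rightarrow> nat set \<Rightarrow> rat" where
  "alphaT a T = Min {mval a i j | i j. i \<in> T \<and> j \<in> T \<and> i \<noteq> j}"

definition gammaT :: "(nat \<Rightarrow> rat \<Rightarrow> complex) \<Rightarrow> nat \<Rightarrow> nat set \<Rightarrow> rat" where
  "gammaT a n T = (if T = {1..n} then alphaT a T
     else alphaT a T - alphaT a (THE T'. T' \<in> rameaux a n \<and> T \<subset> T' \<and>
                                      (\<forall>S\<in>rameaux a n. T \<subset> S \<longrightarrow> T' \<subseteq> S)))"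

end

theory Submission
  imports Defs
begin



lemma val_neg: "val (\<lambda>q. - f q) = val f"
  unfolding val_def by simp

lemma mval_sym: "mval a i j = mval a j i"
proof -
  have "(\<lambda>q. a j q - a i q) = (\<lambda>q. - (a i q - a j q))" by simp
  then show ?thesis unfolding mval_def using val_neg[of "\<lambda>q. a i q - a j q"] by simp
qed

lemma puiseux_diff:
  assumes "f \<in> puiseux" "g \<in> puiseux"
  shows "(\<lambda>q. f q - g q) \<in> puiseux"
proof -
  obtain d1 N1 where d1: "d1 > 0" and h1: "\<forall>q. f q \<noteq> 0 \<longrightarrow> (\<exists>k::int. k \<ge> N1 \<and> q = of_int k / of_nat d1)"
    using assms(1) unfolding puiseux_def by blast
  obtain d2 N2 where d2: "d2 > 0" and h2: "\<forall>q. g q \<noteq> 0 \<longrightarrow> (\<exists>k::int. k \<ge> N2 \<and> q = of_int k / of_nat d2)"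
    using assms(2) unfolding puiseux_def by blast
  have "\<forall>q. f q - g q \<noteq> 0 \<longrightarrow> (\<exists>k::int. k \<ge> min (N1 * int d2) (N2 * int d1) \<and> q = of_int k / of_nat (d1*d2))"
  proof (intro allI impI)
    fix q assume "f q - g q \<noteq> 0"
    then have "f q \<noteq> 0 \<or> g q \<noteq> 0" by auto
    then show "\<exists>k::int. k \<ge> min (N1 * int d2) (N2 * int d1) \<and> q = of_int k / of_nat (d1*d2)"
    proof
      assume "f q \<noteq> 0"
      then obtain k where k: "k \<ge> N1" "q = of_int k / of_nat d1" using h1 by blast
      have "q = of_int (k * int d2) / of_nat (d1*d2)" using k d2 by (simp add: field_simps)
      moreover have "k * int d2 \<ge> N1 * int d2" using k d2 by (simp add: mult_right_mono)
      ultimately show ?thesis by (intro exI[of _ "k * int d2"]) auto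
    next
      assume "g q \<noteq> 0"
      then obtain k where k: "k \<ge> N2" "q = of_int k / of_nat d2" using h2 by blast
      have "q = of_int (k * int d1) / of_nat (d1*d2)" using k d1 by (simp add: field_simps)
      moreover have "k * int d1 \<ge> N2 * int d1" using k d1 by (simp add: mult_right_mono)
      ultimately show ?thesis by (intro exI[of _ "k * int d1"]) auto
    qed
  qed
  then show ?thesis unfolding puiseux_def using d1 d2 by (intro CollectI exI[of _ "d1*d2"]) auto
qed

lemma puiseux_min:
  assumes "f \<in> puiseux" "f q \<noteq> 0"
  shows "\<exists>q. f q \<noteq> 0 \<and> (\<forall>p<q. f p = 0)"
proof -
  obtain d N where d: "d > 0" and h: "\<forall>q. f q \<noteq> 0 \<longrightarrow> (\<exists>k::int. k \<ge> N \<and> q = of_int k / of_nat d)"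
    using assms(1) unfolding puiseux_def by blast
  define P where "P = (\<lambda>m::nat. f (of_int (N + int m) / of_nat d) \<noteq> 0)"
  obtain k where k: "k \<ge> N" "q = of_int k / of_nat d" using h assms(2) by blast
  have "P (nat (k - N))" unfolding P_def using k assms(2) by simp
  then have P0: "P (LEAST m. P m)" by (rule LeastI)
  define q0 where "q0 = of_int (N + int (LEAST m. P m)) / (of_nat d :: rat)"
  have "f q0 \<noteq> 0" using P0 unfolding P_def q0_def by simp
  moreover have "\<forall>p<q0. f p = 0"
  proof (intro allI impI, rule ccontr)
    fix p assume lt: "p < q0" and nz: "f p \<noteq> 0"
    obtain k' where k': "k' \<ge> N" "p = of_int k' / of_nat d" using h nz by blast
    have "P (nat (k' - N))" unfolding P_def using k' nz by simp
    then have "(LEAST m. P m) \<le> nat (k' - N)" by (rule Least_le)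
    then have "N + int (LEAST m. P m) \<le> k'" using k' by linarith
    then have "(of_int (N + int (LEAST m. P m)) :: rat) \<le> of_int k'" by linarith
    then have "q0 \<le> p" unfolding q0_def k'(2) using d by (simp add: divide_right_mono)
    with lt show False by simp
  qed
  ultimately show ?thesis by blast
qed

lemma val_char:
  assumes "f q \<noteq> 0" "\<forall>p<q. f p = 0"
  shows "val f = q"
  unfolding val_def
proof (rule the_equality)
  show "f q \<noteq> 0 \<and> (\<forall>p<q. f p = 0)" using assms by blast
next
  fix q' assume q': "f q' \<noteq> 0 \<and> (\<forall>p<q'. f p = 0)"
  show "q' = q"
  proof (rule linorder_cases[of q' q])
    assume "q' < q" then show ?thesis using assms q' by blast
  next
    assume "q < q'" then show ?thesis using assms q' by blast
  qed
qed

lemma val_prop: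
  assumes "f \<in> puiseux" "f q \<noteq> 0"
  shows "f (val f) \<noteq> 0 \<and> (\<forall>p<val f. f p = 0)"
proof -
  obtain q0 where "f q0 \<noteq> 0" "\<forall>p<q0. f p = 0" using puiseux_min[OF assms] by blast
  then show ?thesis using val_char by metis
qed

lemma ultra:
  assumes "a i \<in> puiseux" "a j \<in> puiseux" "a k \<in> puiseux"
    "a i \<noteq> a j" "a j \<noteq> a k" "a i \<noteq> a k"
  shows "mval a i k \<ge> min (mval a i j) (mval a j k)"
proof (rule ccontr)
  define f where "f = (\<lambda>q. a i q - a j q)"
  define g where "g = (\<lambda>q. a j q - a k q)"
  define h where "h = (\<lambda>q. a i q - a k q)"
  have pf: "f \<in> puiseux" "g \<in> puiseux" "h \<in> puiseux"
    unfolding f_def g_def h_def using assms by (auto intro: puiseux_diff)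
  obtain qf where "a i qf \<noteq> a j qf" using assms(4) by blast
  then have vf: "\<forall>p<val f. f p = 0" using val_prop[OF pf(1), of qf] unfolding f_def by auto
  obtain qg where "a j qg \<noteq> a k qg" using assms(5) by blast
  then have vg: "\<forall>p<val g. g p = 0" using val_prop[OF pf(2), of qg] unfolding g_def by auto
  obtain qh where "a i qh \<noteq> a k qh" using assms(6) by blast
  then have vh: "h (val h) \<noteq> 0" using val_prop[OF pf(3), of qh] unfolding h_def by auto
  assume "\<not> mval a i k \<ge> min (mval a i j) (mval a j k)"
  then have "val h < val f" "val h < val g" unfolding mval_def f_def g_def h_def by auto
  then have "f (val h) = 0" "g (val h) = 0" using vf vg by auto
  then have "h (val h) = 0" unfolding f_def g_def h_def by (simp add: algebra_simps)
  with vh show False by simp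
qed




definition ultraP :: "(nat \<Rightarrow> rat \<Rightarrow> complex) \<Rightarrow> nat \<Rightarrow> bool" where
  "ultraP a n = (\<forall>i\<in>{1..n}. \<forall>j\<in>{1..n}. \<forall>k\<in>{1..n}. i \<noteq> j \<and> j \<noteq> k \<and> i \<noteq> k \<longrightarrow>
      mval a i k \<ge> min (mval a i j) (mval a j k))"

lemma ultraD: "ultraP a n \<Longrightarrow> i\<in>{1..n} \<Longrightarrow> j\<in>{1..n} \<Longrightarrow> k\<in>{1..n} \<Longrightarrow> i \<noteq> j \<Longrightarrow> j \<noteq> k \<Longrightarrow> i \<noteq> k \<Longrightarrow>
      mval a i k \<ge> min (mval a i j) (mval a j k)"
  unfolding ultraP_def by blast

lemma iso:
  assumes U: "ultraP a n" and "i\<in>{1..n}" "p\<in>{1..n}" "k\<in>{1..n}" "i \<noteq> p" "p \<noteq> k" "i \<noteq> k"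
    and lt: "mval a i p > mval a i k"
  shows "mval a p k = mval a i k"
proof -
  have 1: "mval a p k \<ge> min (mval a p i) (mval a i k)" using ultraD[OF U, of p i k] assms by auto
  have 2: "mval a i k \<ge> min (mval a i p) (mval a p k)" using ultraD[OF U, of i p k] assms by auto
  have "mval a p i = mval a i p" by (rule mval_sym)
  with 1 2 lt show ?thesis by (auto simp: min_def split: if_splits)
qed

lemma laminar:
  assumes "T \<in> rameaux a n" "S \<in> rameaux a n" "x \<in> T" "x \<in> S"
  shows "T \<subseteq> S \<or> S \<subseteq> T"
proof (rule ccontr)
  assume "\<not> (T \<subseteq> S \<or> S \<subseteq> T)"
  then obtain y z where y: "y \<in> T" "y \<notin> S" and z: "z \<in> S" "z \<notin> T" by blast
  have TS: "T \<subseteq> {1..n}" "S \<subseteq> {1..n}" using assms unfolding rameaux_def by auto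
  have RT: "\<forall>i\<in>T. \<forall>j\<in>T. \<forall>k\<in>{1..n}-T. i \<noteq> j \<longrightarrow> mval a i j > mval a i k \<and> mval a i k = mval a j k"
    using assms(1) unfolding rameaux_def by blast
  have RS: "\<forall>i\<in>S. \<forall>j\<in>S. \<forall>k\<in>{1..n}-S. i \<noteq> j \<longrightarrow> mval a i j > mval a i k \<and> mval a i k = mval a j k"
    using assms(2) unfolding rameaux_def by blast
  have "z \<in> {1..n} - T" "y \<in> {1..n} - S" "x \<noteq> y" "x \<noteq> z" using TS y z assms(3,4) by auto
  then have "mval a x y > mval a x z" "mval a x z > mval a x y"
    using RT RS assms(3,4) y(1) z(1) by blast+
  then show False by simp
qed

lemma rameaux_fin: "finite (rameaux a n)"
proof -
  have "rameaux a n \<subseteq> Pow {1..n}" unfolding rameaux_def by auto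
  then show ?thesis by (rule finite_subset) simp
qed

lemma rameaux_sub: "T \<in> rameaux a n \<Longrightarrow> T \<subseteq> {1..n}"
  unfolding rameaux_def by auto

lemma rameaux_card: "T \<in> rameaux a n \<Longrightarrow> card T \<ge> 2"
  unfolding rameaux_def by auto

lemma top_rameau: "n \<ge> 2 \<Longrightarrow> {1..n} \<in> rameaux a n"
  unfolding rameaux_def by auto

lemma parent_ex:
  assumes n: "n \<ge> 2" and T: "T \<in> rameaux a n" "T \<noteq> {1..n}"
  shows "\<exists>P. P \<in> rameaux a n \<and> T \<subset> P \<and> (\<forall>S\<in>rameaux a n. T \<subset> S \<longrightarrow> P \<subseteq> S)"
proof -
  define C where "C = {S \<in> rameaux a n. T \<subset> S}"
  have fC: "finite C" unfolding C_def using rameaux_fin by auto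
  have "{1..n} \<in> C" unfolding C_def using top_rameau[OF n] rameaux_sub[OF T(1)] T(2) by auto
  then have neC: "C \<noteq> {}" by auto
  have "Min (card ` C) \<in> card ` C" using fC neC by simp
  then obtain P where P: "P \<in> C" "card P = Min (card ` C)" by auto
  have Pmin: "card P \<le> card S" if "S \<in> C" for S using P(2) fC that by simp
  have "card T \<ge> 2" using rameaux_card[OF T(1)] .
  then have "T \<noteq> {}" by (intro notI) simp
  then obtain x where x: "x \<in> T" by blast
  have "P \<subseteq> S" if S: "S \<in> rameaux a n" "T \<subset> S" for S
  proof -
    have "P \<subseteq> S \<or> S \<subseteq> P" using laminar[of P a n S x] P(1) S x unfolding C_def by auto
    moreover have "\<not> S \<subset> P"
    proof
      assume "S \<subset> P"
      moreover have PR: "P \<in> rameaux a n" using P(1) unfolding C_def by simp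
      moreover have "finite P" using finite_subset[OF rameaux_sub[OF PR]] by simp
      ultimately have "card S < card P" by (simp add: psubset_card_mono)
      moreover have "S \<in> C" unfolding C_def using S by auto
      ultimately show False using Pmin[of S] by linarith
    qed
    ultimately show ?thesis by blast
  qed
  then show ?thesis using P(1) unfolding C_def by blast
qed

lemma gamma_parent:
  assumes n: "n \<ge> 2" and T: "T \<in> rameaux a n" "T \<noteq> {1..n}"
  shows "\<exists>P. P \<in> rameaux a n \<and> T \<subset> P \<and> (\<forall>S\<in>rameaux a n. T \<subset> S \<longrightarrow> P \<subseteq> S)
     \<and> gammaT a n T = alphaT a T - alphaT a P"
proof -
  obtain P where P: "P \<in> rameaux a n \<and> T \<subset> P \<and> (\<forall>S\<in>rameaux a n. T \<subset> S \<longrightarrow> P \<subseteq> S)"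
    using parent_ex[OF assms] by blast
  have "(THE T'. T' \<in> rameaux a n \<and> T \<subset> T' \<and> (\<forall>S\<in>rameaux a n. T \<subset> S \<longrightarrow> T' \<subseteq> S)) = P"
  proof (rule the_equality)
    show "P \<in> rameaux a n \<and> T \<subset> P \<and> (\<forall>S\<in>rameaux a n. T \<subset> S \<longrightarrow> P \<subseteq> S)" using P .
  next
    fix T' assume T': "T' \<in> rameaux a n \<and> T \<subset> T' \<and> (\<forall>S\<in>rameaux a n. T \<subset> S \<longrightarrow> T' \<subseteq> S)"
    then have "T' \<subseteq> P" using P by blast
    moreover have "P \<subseteq> T'" using P T' by blast
    ultimately show "T' = P" by (rule subset_antisym)
  qed
  then show ?thesis using P T(2) unfolding gammaT_def by auto
qed

lemma telescope:
  assumes n: "n \<ge> 2"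
  shows "S \<in> rameaux a n \<Longrightarrow> (\<Sum>T\<in>{T\<in>rameaux a n. S \<subseteq> T}. gammaT a n T) = alphaT a S"
proof (induction "card {1..n} - card S" arbitrary: S rule: less_induct)
  case less
  show ?case
  proof (cases "S = {1..n}")
    case True
    have "{T\<in>rameaux a n. S \<subseteq> T} = {S}" using True less.prems rameaux_sub by blast
    then show ?thesis using True unfolding gammaT_def by simp
  next
    case False
    obtain P where P: "P \<in> rameaux a n" "S \<subset> P" "\<forall>R\<in>rameaux a n. S \<subset> R \<longrightarrow> P \<subseteq> R"
      "gammaT a n S = alphaT a S - alphaT a P"
      using gamma_parent[OF n less.prems False] by blast
    have "card S < card P" using P(2) rameaux_sub[OF P(1)]
      by (meson finite_atLeastAtMost finite_subset psubset_card_mono)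
    moreover have "card P \<le> card {1..n}" using rameaux_sub[OF P(1)] by (rule card_mono[OF finite_atLeastAtMost])
    ultimately have "card {1..n} - card P < card {1..n} - card S" by linarith
    then have IH: "(\<Sum>T\<in>{T\<in>rameaux a n. P \<subseteq> T}. gammaT a n T) = alphaT a P"
      using less.hyps P(1) by blast
    have eq: "{T\<in>rameaux a n. S \<subseteq> T} = insert S {T\<in>rameaux a n. P \<subseteq> T}"
      using P less.prems by blast
    have nin: "S \<notin> {T\<in>rameaux a n. P \<subseteq> T}" using P(2) by blast
    have fin: "finite {T\<in>rameaux a n. P \<subseteq> T}" using rameaux_fin by simp
    show ?thesis unfolding eq using sum.insert[OF fin nin, of "gammaT a n"] IH P(4) by simp
  qed
qed




lemma ball_ge:
  assumes U: "ultraP a n" and ij: "i\<in>{1..n}" "j\<in>{1..n}" "i \<noteq> j"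
    and B: "B = {k\<in>{1..n}. k = i \<or> mval a i j \<le> mval a i k}"
    and pq: "p \<in> B" "q \<in> B" "p \<noteq> q"
  shows "mval a p q \<ge> mval a i j"
proof (cases "p = i")
  case True then show ?thesis using pq B by auto
next
  case pi: False
  show ?thesis
  proof (cases "q = i")
    case True then show ?thesis using pq B pi mval_sym[of a p i] by auto
  next
    case False
    have "mval a p q \<ge> min (mval a p i) (mval a i q)"
      using ultraD[OF U, of p i q] pq B pi False ij by auto
    moreover have "mval a p i \<ge> mval a i j" using pq B pi mval_sym[of a p i] by auto
    moreover have "mval a i q \<ge> mval a i j" using pq B False by auto
    ultimately show ?thesis by (auto simp: min_def split: if_splits)
  qed
qed

lemma ball_props:
  assumes U: "ultraP a n" and ij: "i\<in>{1..n}" "j\<in>{1..n}" "i \<noteq> j"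
    and B: "B = {k\<in>{1..n}. k = i \<or> mval a i j \<le> mval a i k}"
  shows "B \<in> rameaux a n" "alphaT a B = mval a i j"
    "\<And>T. T \<in> rameaux a n \<Longrightarrow> (i \<in> T \<and> j \<in> T) \<longleftrightarrow> B \<subseteq> T"
proof -
  have iB: "i \<in> B" and jB: "j \<in> B" using B ij by auto
  have Bs: "B \<subseteq> {1..n}" using B by auto
  have "card {i,j} = 2" using ij by simp
  moreover have "card {i,j} \<le> card B" using iB jB Bs
    by (intro card_mono) (auto intro: finite_subset)
  ultimately have cB: "card B \<ge> 2" by simp
  have same: "mval a p k = mval a i k" if p: "p \<in> B" and k: "k \<in> {1..n} - B" for p k
  proof (cases "p = i")
    case True then show ?thesis by simp
  next
    case False
    have "k \<noteq> i" "mval a i k < mval a i j" using k B ij by auto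
    moreover have "mval a i p \<ge> mval a i j" using p B False by auto
    moreover have "p \<noteq> k" using p k by auto
    ultimately show ?thesis using iso[OF U, of i p k] ij p k Bs False by auto
  qed
  have cond: "\<forall>p\<in>B. \<forall>q\<in>B. \<forall>k\<in>{1..n}-B. p \<noteq> q \<longrightarrow> mval a p q > mval a p k \<and> mval a p k = mval a q k"
  proof (intro ballI impI)
    fix p q k assume p: "p \<in> B" and q: "q \<in> B" and k: "k \<in> {1..n} - B" and pq: "p \<noteq> q"
    have "mval a p q \<ge> mval a i j" using ball_ge[OF U ij B p q pq] .
    moreover have "mval a i k < mval a i j" using k B ij by auto
    ultimately show "mval a p q > mval a p k \<and> mval a p k = mval a q k"
      using same[OF p k] same[OF q k] by auto
  qed
  show "B \<in> rameaux a n" unfolding rameaux_def using Bs cB cond by blast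
  define X where "X = {mval a p q | p q. p \<in> B \<and> q \<in> B \<and> p \<noteq> q}"
  have "X \<subseteq> (\<lambda>(p,q). mval a p q) ` (B \<times> B)" unfolding X_def by auto
  moreover have "finite B" using Bs finite_subset by blast
  ultimately have fX: "finite X" by (meson finite_SigmaI finite_imageI finite_subset)
  have "mval a i j \<in> X" unfolding X_def using iB jB ij by blast
  moreover have "\<And>y. y \<in> X \<Longrightarrow> mval a i j \<le> y" unfolding X_def using ball_ge[OF U ij B] by blast
  ultimately have "Min X = mval a i j" using fX by (intro Min_eqI) auto
  then show "alphaT a B = mval a i j" unfolding alphaT_def X_def by simp
  fix T assume T: "T \<in> rameaux a n"
  show "(i \<in> T \<and> j \<in> T) \<longleftrightarrow> B \<subseteq> T"
  proof
    assume "B \<subseteq> T" then show "i \<in> T \<and> j \<in> T" using iB jB by auto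
  next
    assume ijT: "i \<in> T \<and> j \<in> T"
    show "B \<subseteq> T"
    proof
      fix k assume k: "k \<in> B"
      show "k \<in> T"
      proof (rule ccontr)
        assume kT: "k \<notin> T"
        have RT: "\<forall>p\<in>T. \<forall>q\<in>T. \<forall>k\<in>{1..n}-T. p \<noteq> q \<longrightarrow> mval a p q > mval a p k \<and> mval a p k = mval a q k"
          using T unfolding rameaux_def by blast
        have "k \<in> {1..n} - T" using k kT Bs by auto
        then have "mval a i j > mval a i k" using RT ijT ij(3) by blast
        moreover have "k \<noteq> i" using kT ijT by auto
        then have "mval a i k \<ge> mval a i j" using k B by auto
        ultimately show False by simp
      qed
    qed
  qed
qed

lemma pair_sum:
  assumes n: "n \<ge> 2" and U: "ultraP a n" and ij: "i\<in>{1..n}" "j\<in>{1..n}" "i \<noteq> j"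
  shows "(\<Sum>T\<in>{T\<in>rameaux a n. i \<in> T \<and> j \<in> T}. gammaT a n T) = mval a i j"
proof -
  define B where "B = {k\<in>{1..n}. k = i \<or> mval a i j \<le> mval a i k}"
  note bp = ball_props[OF U ij B_def]
  have "{T\<in>rameaux a n. i \<in> T \<and> j \<in> T} = {T\<in>rameaux a n. B \<subseteq> T}" using bp(3) by blast
  then show ?thesis using telescope[OF n bp(1)] bp(2) by simp
qed




theorem mainTheorem9:
  fixes n :: nat and a :: "nat \<Rightarrow> rat \<Rightarrow> complex" and \<mu> :: "nat \<Rightarrow> nat"
  assumes "n \<ge> 2"
    and "\<forall>i\<in>{1..n}. a i \<in> puiseux"
    and "inj_on a {1..n}"
    and "\<forall>i\<in>{1..n}. \<mu> i > 0"
  shows "\<forall>i\<in>{1..n}. \<forall>j\<in>{1..n}.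
           magic a \<mu> n i j = (\<Sum>T\<in>rameaux a n. gammaT a n T * magicT \<mu> T i j)"
proof (intro ballI)
  have U: "ultraP a n" unfolding ultraP_def
  proof (intro ballI impI)
    fix i j k assume "i\<in>{1..n}" "j\<in>{1..n}" "k\<in>{1..n}" "i \<noteq> j \<and> j \<noteq> k \<and> i \<noteq> k"
    then show "mval a i k \<ge> min (mval a i j) (mval a j k)"
      using ultra[of a i j k] assms(2,3) unfolding inj_on_def by metis
  qed
  let ?R = "rameaux a n"
  fix i j assume i: "i\<in>{1..n}" and j: "j\<in>{1..n}"
  show "magic a \<mu> n i j = (\<Sum>T\<in>?R. gammaT a n T * magicT \<mu> T i j)"
  proof (cases "i = j")
    case False
    have "(\<Sum>T\<in>?R. gammaT a n T * magicT \<mu> T i j)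
        = (\<Sum>T\<in>?R. if i \<in> T \<and> j \<in> T then gammaT a n T * (- of_nat (\<mu> i)) else 0)"
      using False by (intro sum.cong) (auto simp: magicT_def)
    also have "\<dots> = (\<Sum>T\<in>{T\<in>?R. i \<in> T \<and> j \<in> T}. gammaT a n T * (- of_nat (\<mu> i)))"
      by (rule sum.inter_filter[OF rameaux_fin, symmetric])
    also have "\<dots> = (\<Sum>T\<in>{T\<in>?R. i \<in> T \<and> j \<in> T}. gammaT a n T) * (- of_nat (\<mu> i))"
      by (rule sum_distrib_right[symmetric])
    also have "\<dots> = mval a i j * (- of_nat (\<mu> i))"
      using pair_sum[OF assms(1) U i j False] by simp
    finally show ?thesis using False unfolding magic_def by simp
  next
    case True
    have step: "gammaT a n T * magicT \<mu> T i i =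
        (\<Sum>k\<in>{1..n}-{i}. if i \<in> T \<and> k \<in> T then gammaT a n T * of_nat (\<mu> k) else 0)"
      if T: "T \<in> ?R" for T
    proof (cases "i \<in> T")
      case False then show ?thesis by (simp add: magicT_def)
    next
      case iT: True
      have eqs: "{k\<in>{1..n}-{i}. k \<in> T} = T - {i}" using rameaux_sub[OF T] by auto
      have "(\<Sum>k\<in>{1..n}-{i}. if i \<in> T \<and> k \<in> T then gammaT a n T * of_nat (\<mu> k) else 0)
          = (\<Sum>k\<in>{1..n}-{i}. if k \<in> T then gammaT a n T * of_nat (\<mu> k) else 0)"
        using iT by simp
      also have "\<dots> = (\<Sum>k\<in>{k\<in>{1..n}-{i}. k \<in> T}. gammaT a n T * of_nat (\<mu> k))"
        by (rule sum.inter_filter[symmetric]) simp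
      also have "\<dots> = gammaT a n T * (\<Sum>k\<in>T-{i}. of_nat (\<mu> k))"
        unfolding eqs by (simp add: sum_distrib_left)
      finally show ?thesis using iT by (simp add: magicT_def)
    qed
    have "(\<Sum>T\<in>?R. gammaT a n T * magicT \<mu> T i j)
       = (\<Sum>T\<in>?R. \<Sum>k\<in>{1..n}-{i}. if i \<in> T \<and> k \<in> T then gammaT a n T * of_nat (\<mu> k) else 0)"
      using True step by (intro sum.cong) auto
    also have "\<dots> = (\<Sum>k\<in>{1..n}-{i}. \<Sum>T\<in>?R. if i \<in> T \<and> k \<in> T then gammaT a n T * of_nat (\<mu> k) else 0)"
      by (rule sum.swap)
    also have "\<dots> = (\<Sum>k\<in>{1..n}-{i}. of_nat (\<mu> k) * mval a k i)"
    proof (intro sum.cong refl)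
      fix k assume k: "k \<in> {1..n}-{i}"
      have "(\<Sum>T\<in>?R. if i \<in> T \<and> k \<in> T then gammaT a n T * of_nat (\<mu> k) else 0)
          = (\<Sum>T\<in>{T\<in>?R. i \<in> T \<and> k \<in> T}. gammaT a n T * of_nat (\<mu> k))"
        by (rule sum.inter_filter[OF rameaux_fin, symmetric])
      also have "\<dots> = (\<Sum>T\<in>{T\<in>?R. i \<in> T \<and> k \<in> T}. gammaT a n T) * of_nat (\<mu> k)"
        by (rule sum_distrib_right[symmetric])
      also have "\<dots> = mval a i k * of_nat (\<mu> k)"
        using pair_sum[OF assms(1) U i, of k] k by auto
      finally show "(\<Sum>T\<in>?R. if i \<in> T \<and> k \<in> T then gammaT a n T * of_nat (\<mu> k) else 0)
          = of_nat (\<mu> k) * mval a k i" using mval_sym[of a i k] by simp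
    qed
    finally show ?thesis using True unfolding magic_def by simp
  qed
qed


end
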